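(* Let $R$ be a commutative ring with unit, $\mathcal{P}$ a poset satisfying the descending chain condition, $F\colon\mathcal{P}\to R\text{-mod}$ a functor, and $i\in\mathcal{P}$. If the natural map $\operatorname{colim}_{\mathcal{P}_{<j}}F\to F(j)$ is injective for every $j\le i$, then $F$ is pseudo-projective at $j$ for every $j\le i$.
   Context: DCC: no infinite strictly descending chains. $\mathcal{P}_{<j}=\{k:k<j\}$, $\mathcal{P}_{\le j}=\{k:k\le j\}$. $F(k<j)$ is the image of the arrow $k\to j$, $F(j<j)=1$. $\operatorname{Im}_F(k)=\sum_{l<k}\operatorname{Im}F(l<k)$; $\max J$ is the set of maximal elements of $J$. $F$ is pseudo-projective at $j$ if for every finite $J\subset\mathcal{P}_{\le j}$ and every $\oplus_{k\in J}x_k\in\bigoplus_{k\in J}F(k)$ with $\sum_{k\in J}F(k<j)(x_k)=0$, one has $x_k\in\operatorname{Im}_F(k)$ for all $k\in\max J$. *)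

theory Defs
  imports "HOL-Algebra.Module" "HOL-Algebra.FiniteProduct"
begin

definition dcc :: "('p::order) itself \<Rightarrow> bool" where
  "dcc _ \<longleftrightarrow> \<not> (\<exists>s::nat \<Rightarrow> 'p. \<forall>n. s (Suc n) < s n)"

definition module_map ::
  "('r, 'c) ring_scheme \<Rightarrow> ('r, 'b) module \<Rightarrow> ('r, 'b) module \<Rightarrow> ('b \<Rightarrow> 'b) \<Rightarrow> bool" where
  "module_map R M N h \<longleftrightarrow>
     (\<forall>x\<in>carrier M. h x \<in> carrier N) \<and>
     (\<forall>x\<in>carrier M. \<forall>y\<in>carrier M. h (x \<oplus>\<^bsub>M\<^esub> y) = h x \<oplus>\<^bsub>N\<^esub> h y) \<and>
     (\<forall>a\<in>carrier R. \<forall>x\<in>carrier M. h (a \<odot>\<^bsub>M\<^esub> x) = a \<odot>\<^bsub>N\<^esub> h x)"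

definition poset_functor ::
  "('r, 'c) ring_scheme \<Rightarrow> ('p::order \<Rightarrow> ('r, 'b) module) \<Rightarrow> ('p \<Rightarrow> 'p \<Rightarrow> 'b \<Rightarrow> 'b) \<Rightarrow> bool" where
  "poset_functor R F f \<longleftrightarrow>
     (\<forall>k. module R (F k)) \<and>
     (\<forall>k l. k \<le> l \<longrightarrow> module_map R (F k) (F l) (f k l)) \<and>
     (\<forall>k. \<forall>x\<in>carrier (F k). f k k x = x) \<and>
     (\<forall>k l m. k \<le> l \<longrightarrow> l \<le> m \<longrightarrow> (\<forall>x\<in>carrier (F k). f k m x = f l m (f k l x)))"

text \<open>Elements of the direct sum of the F k over k < j: finitely supported families.\<close>
definition dsum_below :: "('p::order \<Rightarrow> ('r, 'b) module) \<Rightarrow> 'p \<Rightarrow> ('p \<Rightarrow> 'b) set" where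
  "dsum_below F j = {x. (\<forall>k. x k \<in> carrier (F k)) \<and> (\<forall>k. \<not> k < j \<longrightarrow> x k = \<zero>\<^bsub>F k\<^esub>)
                        \<and> finite {k. x k \<noteq> \<zero>\<^bsub>F k\<^esub>}}"

text \<open>The submodule of the direct sum generated by the colimit relations
  \<iota>_k(a) - \<iota>_l(F(k<l) a) for k < l < j; the colimit over P_{<j} is the quotient by it.\<close>
inductive_set colim_rel ::
  "('r, 'c) ring_scheme \<Rightarrow> ('p::order \<Rightarrow> ('r, 'b) module) \<Rightarrow> ('p \<Rightarrow> 'p \<Rightarrow> 'b \<Rightarrow> 'b) \<Rightarrow> 'p \<Rightarrow> ('p \<Rightarrow> 'b) set"
  for R F f j where
  zero: "(\<lambda>m. \<zero>\<^bsub>F m\<^esub>) \<in> colim_rel R F f j"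
| gen: "\<lbrakk>k < l; l < j; a \<in> carrier (F k)\<rbrakk> \<Longrightarrow>
     (\<lambda>m. if m = k then a else if m = l then \<ominus>\<^bsub>F l\<^esub> (f k l a) else \<zero>\<^bsub>F m\<^esub>) \<in> colim_rel R F f j"
| add: "\<lbrakk>x \<in> colim_rel R F f j; y \<in> colim_rel R F f j\<rbrakk> \<Longrightarrow>
     (\<lambda>m. x m \<oplus>\<^bsub>F m\<^esub> y m) \<in> colim_rel R F f j"
| smult: "\<lbrakk>a \<in> carrier R; x \<in> colim_rel R F f j\<rbrakk> \<Longrightarrow>
     (\<lambda>m. a \<odot>\<^bsub>F m\<^esub> x m) \<in> colim_rel R F f j"

text \<open>The natural map colim_{P_{<j}} F \<rightarrow> F(j), [x] \<mapsto> \<Sum>_k F(k<j)(x_k), is injective: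
  its kernel (on the direct sum) is contained in the relation submodule.\<close>
definition colim_map_inj ::
  "('r, 'c) ring_scheme \<Rightarrow> ('p::order \<Rightarrow> ('r, 'b) module) \<Rightarrow> ('p \<Rightarrow> 'p \<Rightarrow> 'b \<Rightarrow> 'b) \<Rightarrow> 'p \<Rightarrow> bool" where
  "colim_map_inj R F f j \<longleftrightarrow>
     (\<forall>x\<in>dsum_below F j.
        finsum (F j) (\<lambda>k. f k j (x k)) {k. x k \<noteq> \<zero>\<^bsub>F k\<^esub>} = \<zero>\<^bsub>F j\<^esub> \<longrightarrow> x \<in> colim_rel R F f j)"

definition Im_F :: "('p::order \<Rightarrow> ('r, 'b) module) \<Rightarrow> ('p \<Rightarrow> 'p \<Rightarrow> 'b \<Rightarrow> 'b) \<Rightarrow> 'p \<Rightarrow> 'b set" where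
  "Im_F F f k = {finsum (F k) (\<lambda>l. f l k (y l)) L | L y.
                   finite L \<and> L \<subseteq> {l. l < k} \<and> (\<forall>l\<in>L. y l \<in> carrier (F l))}"

definition pseudo_projective ::
  "('p::order \<Rightarrow> ('r, 'b) module) \<Rightarrow> ('p \<Rightarrow> 'p \<Rightarrow> 'b \<Rightarrow> 'b) \<Rightarrow> 'p \<Rightarrow> bool" where
  "pseudo_projective F f j \<longleftrightarrow>
     (\<forall>J x. finite J \<longrightarrow> J \<subseteq> {k. k \<le> j} \<longrightarrow> (\<forall>k\<in>J. x k \<in> carrier (F k)) \<longrightarrow>
        finsum (F j) (\<lambda>k. f k j (x k)) J = \<zero>\<^bsub>F j\<^esub> \<longrightarrow>
        (\<forall>k\<in>J. (\<forall>l\<in>J. \<not> k < l) \<longrightarrow> x k \<in> Im_F F f k))"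

end

theory Submission imports Defs "HOL-Library.Multiset" begin

fun gv :: "('p::order \<Rightarrow> ('r, 'b) module) \<Rightarrow> ('p \<Rightarrow> 'p \<Rightarrow> 'b \<Rightarrow> 'b) \<Rightarrow> 'p \<times> 'p \<times> 'b \<Rightarrow> 'p \<Rightarrow> 'b" where
  "gv F f (k, l, a) m = (if m = k then a else if m = l then \<ominus>\<^bsub>F l\<^esub> (f k l a) else \<zero>\<^bsub>F m\<^esub>)"

fun vl :: "('p::order \<Rightarrow> ('r, 'b) module) \<Rightarrow> ('p \<Rightarrow> 'p \<Rightarrow> 'b \<Rightarrow> 'b) \<Rightarrow> ('p \<times> 'p \<times> 'b) list \<Rightarrow> 'p \<Rightarrow> 'b" where
  "vl F f [] m = \<zero>\<^bsub>F m\<^esub>"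
| "vl F f (g # gs) m = gv F f g m \<oplus>\<^bsub>F m\<^esub> vl F f gs m"

definition okl :: "('p::order \<Rightarrow> ('r, 'b) module) \<Rightarrow> ('p \<Rightarrow> bool) \<Rightarrow> ('p \<times> 'p \<times> 'b) list \<Rightarrow> bool" where
  "okl F T gs \<longleftrightarrow> (\<forall>(k, l, a) \<in> set gs. k < l \<and> T l \<and> a \<in> carrier (F k))"

locale pf =
  fixes R :: "('r, 'c) ring_scheme" and F :: "'p::order \<Rightarrow> ('r, 'b) module" and f :: "'p \<Rightarrow> 'p \<Rightarrow> 'b \<Rightarrow> 'b"
  assumes cr: "cring R" and pfun: "poset_functor R F f"
begin

lemma md: "module R (F k)"
  using pfun unfolding poset_functor_def apply (elim conjE) apply (drule spec[of _ k]) apply assumption done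

lemma f_closed: "k \<le> l \<Longrightarrow> x \<in> carrier (F k) \<Longrightarrow> f k l x \<in> carrier (F l)"
  using pfun unfolding poset_functor_def module_map_def by blast

lemma f_add: "k \<le> l \<Longrightarrow> x \<in> carrier (F k) \<Longrightarrow> y \<in> carrier (F k) \<Longrightarrow> f k l (x \<oplus>\<^bsub>F k\<^esub> y) = f k l x \<oplus>\<^bsub>F l\<^esub> f k l y"
  using pfun unfolding poset_functor_def module_map_def by blast

lemma f_smult: "k \<le> l \<Longrightarrow> a \<in> carrier R \<Longrightarrow> x \<in> carrier (F k) \<Longrightarrow> f k l (a \<odot>\<^bsub>F k\<^esub> x) = a \<odot>\<^bsub>F l\<^esub> f k l x"
  using pfun unfolding poset_functor_def module_map_def by blast

lemma f_id: "x \<in> carrier (F k) \<Longrightarrow> f k k x = x"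
  using pfun unfolding poset_functor_def by blast

lemma f_zero: "k \<le> l \<Longrightarrow> f k l \<zero>\<^bsub>F k\<^esub> = \<zero>\<^bsub>F l\<^esub>"
proof -
  assume kl: "k \<le> l"
  interpret K: module R "F k" by (rule md)
  interpret L: module R "F l" by (rule md)
  have "f k l \<zero>\<^bsub>F k\<^esub> = f k l \<zero>\<^bsub>F k\<^esub> \<oplus>\<^bsub>F l\<^esub> f k l \<zero>\<^bsub>F k\<^esub>"
    using f_add[OF kl, of "\<zero>\<^bsub>F k\<^esub>" "\<zero>\<^bsub>F k\<^esub>"] by simp
  then show ?thesis using f_closed[OF kl K.zero_closed]
    by (metis L.add.r_cancel_one' L.zero_closed)
qed

lemma f_neg: "k \<le> l \<Longrightarrow> x \<in> carrier (F k) \<Longrightarrow> f k l (\<ominus>\<^bsub>F k\<^esub> x) = \<ominus>\<^bsub>F l\<^esub> f k l x"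
proof -
  assume kl: "k \<le> l" and x: "x \<in> carrier (F k)"
  interpret K: module R "F k" by (rule md)
  interpret L: module R "F l" by (rule md)
  have "f k l (\<ominus>\<^bsub>F k\<^esub> x) \<oplus>\<^bsub>F l\<^esub> f k l x = \<zero>\<^bsub>F l\<^esub>"
    using f_add[OF kl, of "\<ominus>\<^bsub>F k\<^esub> x" x] x f_zero[OF kl] by (simp add: K.l_neg)
  then show ?thesis using f_closed[OF kl] x
    by (metis K.add.inv_closed L.add.inv_equality)
qed

lemma neg_zero: "\<ominus>\<^bsub>F k\<^esub> \<zero>\<^bsub>F k\<^esub> = \<zero>\<^bsub>F k\<^esub>"
proof -
  interpret K: module R "F k" by (rule md)
  show ?thesis by (rule K.minus_equality) auto
qed

lemma finsum_neg:
  assumes "finite A" "g \<in> A \<rightarrow> carrier (F k)"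
  shows "finsum (F k) (\<lambda>x. \<ominus>\<^bsub>F k\<^esub> g x) A = \<ominus>\<^bsub>F k\<^esub> finsum (F k) g A"
  using assms
proof (induction A rule: finite_induct)
  case empty
  interpret K: module R "F k" by (rule md)
  show ?case by (simp add: neg_zero)
next
  case (insert x A)
  interpret K: module R "F k" by (rule md)
  have g: "g \<in> A \<rightarrow> carrier (F k)" "g x \<in> carrier (F k)" using insert by auto
  have "finsum (F k) (\<lambda>x. \<ominus>\<^bsub>F k\<^esub> g x) (insert x A) = \<ominus>\<^bsub>F k\<^esub> g x \<oplus>\<^bsub>F k\<^esub> finsum (F k) (\<lambda>x. \<ominus>\<^bsub>F k\<^esub> g x) A"
    using insert g by (subst K.finsum_insert) auto
  also have "\<dots> = \<ominus>\<^bsub>F k\<^esub> g x \<oplus>\<^bsub>F k\<^esub> \<ominus>\<^bsub>F k\<^esub> finsum (F k) g A" using insert g by simp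
  also have "\<dots> = \<ominus>\<^bsub>F k\<^esub> (g x \<oplus>\<^bsub>F k\<^esub> finsum (F k) g A)"
    using g by (simp add: K.minus_add K.a_comm)
  also have "\<dots> = \<ominus>\<^bsub>F k\<^esub> finsum (F k) g (insert x A)"
    using insert g by (subst K.finsum_insert) auto
  finally show ?case .
qed

lemma gv_closed: "k < l \<Longrightarrow> a \<in> carrier (F k) \<Longrightarrow> gv F f (k, l, a) m \<in> carrier (F m)"
proof -
  assume kl: "k < l" and a: "a \<in> carrier (F k)"
  interpret M: module R "F m" by (rule md)
  interpret L: module R "F l" by (rule md)
  show ?thesis using a f_closed[of k l a] kl by auto
qed

lemma okl_cons: "okl F T (g # gs) \<longleftrightarrow> (fst g < fst (snd g) \<and> T (fst (snd g)) \<and> snd (snd g) \<in> carrier (F (fst g))) \<and> okl F T gs"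
  unfolding okl_def by (cases g) auto

lemma okl_append: "okl F T (gs @ hs) \<longleftrightarrow> okl F T gs \<and> okl F T hs"
  unfolding okl_def by (simp add: ball_Un)

lemma okl_filter: "okl F T gs \<Longrightarrow> okl F T (filter p gs)"
  unfolding okl_def by auto

lemma okl_mono: "okl F T gs \<Longrightarrow> (\<And>l. T l \<Longrightarrow> T' l) \<Longrightarrow> okl F T' gs"
  unfolding okl_def by auto

lemma vl_closed: "okl F T gs \<Longrightarrow> vl F f gs m \<in> carrier (F m)"
proof (induction gs)
  case Nil
  interpret M: module R "F m" by (rule md)
  show ?case by simp
next
  case (Cons g gs)
  interpret M: module R "F m" by (rule md)
  obtain k l a where g: "g = (k, l, a)" by (cases g) auto
  show ?case using Cons gv_closed[of k l a m] unfolding g okl_cons by auto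
qed

lemma vl_append: "okl F T gs \<Longrightarrow> okl F T' hs \<Longrightarrow> vl F f (gs @ hs) m = vl F f gs m \<oplus>\<^bsub>F m\<^esub> vl F f hs m"
proof (induction gs)
  case Nil
  interpret M: module R "F m" by (rule md)
  show ?case using vl_closed[OF Nil(2)] by simp
next
  case (Cons g gs)
  interpret M: module R "F m" by (rule md)
  obtain k l a where g: "g = (k, l, a)" by (cases g) auto
  have c: "gv F f g m \<in> carrier (F m)" using Cons(2) gv_closed[of k l a m] unfolding g okl_cons by auto
  have ok: "okl F T gs" using Cons(2) unfolding okl_cons by auto
  show ?case using Cons(1)[OF ok Cons(3)] c vl_closed[OF ok] vl_closed[OF Cons(3)]
    by (simp add: M.a_assoc)
qed

lemma vl_smult:
  assumes "okl F T gs" "c \<in> carrier R"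
  shows "vl F f (map (\<lambda>(k, l, b). (k, l, c \<odot>\<^bsub>F k\<^esub> b)) gs) m = c \<odot>\<^bsub>F m\<^esub> vl F f gs m"
  using assms
proof (induction gs)
  case Nil
  interpret M: module R "F m" by (rule md)
  show ?case using Nil by simp
next
  case (Cons g gs)
  interpret M: module R "F m" by (rule md)
  obtain k l a where g: "g = (k, l, a)" by (cases g) auto
  have kl: "k < l" and a: "a \<in> carrier (F k)" and ok: "okl F T gs" using Cons(2) unfolding g okl_cons by auto
  have gvs: "gv F f (k, l, c \<odot>\<^bsub>F k\<^esub> a) m = c \<odot>\<^bsub>F m\<^esub> gv F f (k, l, a) m"
  proof -
    interpret K: module R "F k" by (rule md)
    interpret L: module R "F l" by (rule md)
    show ?thesis
      using kl a Cons(3) f_smult[of k l c a] f_closed[of k l a] L.smult_r_minus[of c "f k l a"]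
      by auto
  qed
  have "vl F f (map (\<lambda>(k, l, b). (k, l, c \<odot>\<^bsub>F k\<^esub> b)) (g # gs)) m
      = c \<odot>\<^bsub>F m\<^esub> gv F f (k, l, a) m \<oplus>\<^bsub>F m\<^esub> c \<odot>\<^bsub>F m\<^esub> vl F f gs m"
    using Cons(1)[OF ok Cons(3)] gvs unfolding g by simp
  also have "\<dots> = c \<odot>\<^bsub>F m\<^esub> vl F f (g # gs) m"
    using gv_closed[OF kl a, of m] vl_closed[OF ok, of m] Cons(3) unfolding g
    by (simp add: M.smult_r_distr)
  finally show ?case .
qed

lemma colim_rel_vl:
  assumes "x \<in> colim_rel R F f j"
  shows "\<exists>gs. okl F (\<lambda>l. l < j) gs \<and> x = vl F f gs"
  using assms
proof (induction rule: colim_rel.induct)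
  case zero
  show ?case by (rule exI[of _ "[]"]) (auto simp: okl_def)
next
  case (gen k l a)
  show ?case
  proof (rule exI[of _ "[(k, l, a)]"], intro conjI ext)
    show "okl F (\<lambda>l. l < j) [(k, l, a)]" using gen by (auto simp: okl_def)
    fix m
    interpret M: module R "F m" by (rule md)
    show "(if m = k then a else if m = l then \<ominus>\<^bsub>F l\<^esub> f k l a else \<zero>\<^bsub>F m\<^esub>) = vl F f [(k, l, a)] m"
      using gv_closed[OF gen(1) gen(3), of m] by simp
  qed
next
  case (add x y)
  then obtain gs hs where gs: "okl F (\<lambda>l. l < j) gs" "x = vl F f gs"
    and hs: "okl F (\<lambda>l. l < j) hs" "y = vl F f hs" by blast
  show ?case
    by (rule exI[of _ "gs @ hs"]) (use gs hs vl_append[OF gs(1) hs(1)] in \<open>auto simp: okl_append\<close>)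
next
  case (smult c x)
  then obtain gs where gs: "okl F (\<lambda>l. l < j) gs" "x = vl F f gs" by blast
  show ?case
  proof (rule exI[of _ "map (\<lambda>(k, l, b). (k, l, c \<odot>\<^bsub>F k\<^esub> b)) gs"], intro conjI ext)
    show "okl F (\<lambda>l. l < j) (map (\<lambda>(k, l, b). (k, l, c \<odot>\<^bsub>F k\<^esub> b)) gs)"
    proof -
      { fix k l b assume "(k, l, b) \<in> set gs"
        interpret K: module R "F k" by (rule md)
        have "c \<odot>\<^bsub>F k\<^esub> b \<in> carrier (F k)" using gs(1) smult(1) \<open>(k, l, b) \<in> set gs\<close>
          unfolding okl_def by auto }
      then show ?thesis using gs(1) unfolding okl_def by auto
    qed
    fix m
    show "c \<odot>\<^bsub>F m\<^esub> x m = vl F f (map (\<lambda>(k, l, b). (k, l, c \<odot>\<^bsub>F k\<^esub> b)) gs) m"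
      using vl_smult[OF gs(1) smult(1)] gs(2) by simp
  qed
qed

lemma vl_filter:
  assumes "okl F T gs"
  shows "vl F f gs m = vl F f (filter p gs) m \<oplus>\<^bsub>F m\<^esub> vl F f (filter (\<lambda>g. \<not> p g) gs) m"
  using assms
proof (induction gs)
  case Nil
  interpret M: module R "F m" by (rule md)
  show ?case by simp
next
  case (Cons g gs)
  interpret M: module R "F m" by (rule md)
  obtain k l a where g: "g = (k, l, a)" by (cases g) auto
  have ok: "okl F T gs" using Cons(2) unfolding okl_cons by auto
  have c: "gv F f g m \<in> carrier (F m)" using Cons(2) gv_closed[of k l a m] unfolding g okl_cons by auto
  have c1: "vl F f (filter p gs) m \<in> carrier (F m)" by (rule vl_closed[OF okl_filter[OF ok]])
  have c2: "vl F f (filter (\<lambda>g. \<not> p g) gs) m \<in> carrier (F m)" by (rule vl_closed[OF okl_filter[OF ok]])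
  show ?case using Cons(1)[OF ok] c c1 c2
    by (cases "p g") (simp_all add: M.a_assoc M.a_lcomm)
qed

lemma vl_zero:
  assumes "\<forall>g\<in>set gs. fst g \<noteq> m \<and> fst (snd g) \<noteq> m" "okl F T gs"
  shows "vl F f gs m = \<zero>\<^bsub>F m\<^esub>"
  using assms
proof (induction gs)
  case Nil
  show ?case by simp
next
  case (Cons g gs)
  interpret M: module R "F m" by (rule md)
  obtain k l a where g: "g = (k, l, a)" by (cases g) auto
  have ok: "okl F T gs" using Cons(3) unfolding okl_cons by auto
  have ne: "k \<noteq> m" "l \<noteq> m" using Cons(2) g by auto
  show ?case using Cons(1)[OF _ ok] Cons(2) ne unfolding g by simp
qed

lemma finsum_zero_terms:
  assumes "finite S" "\<And>k. k \<in> S \<Longrightarrow> g k = \<zero>\<^bsub>F m\<^esub>"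
  shows "finsum (F m) g S = \<zero>\<^bsub>F m\<^esub>"
proof -
  interpret M: module R "F m" by (rule md)
  have "finsum (F m) g S = finsum (F m) (\<lambda>k. \<zero>\<^bsub>F m\<^esub>) S"
    using assms by (intro M.finsum_cong') auto
  then show ?thesis by simp
qed

lemma sum_lemma:
  assumes "okl F T P" "\<forall>g\<in>set P. fst (snd g) = m" "finite S" "fst ` set P \<subseteq> S" "S \<subseteq> {k. k < m}"
  shows "finsum (F m) (\<lambda>k. f k m (vl F f P k)) S = \<ominus>\<^bsub>F m\<^esub> vl F f P m"
  using assms
proof (induction P)
  case Nil
  interpret M: module R "F m" by (rule md)
  have "finsum (F m) (\<lambda>k. f k m (vl F f [] k)) S = \<zero>\<^bsub>F m\<^esub>"
    using Nil f_zero by (intro finsum_zero_terms) auto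
  then show ?case by (simp add: neg_zero)
next
  case (Cons g P)
  interpret M: module R "F m" by (rule md)
  obtain k0 l a where g: "g = (k0, l, a)" by (cases g) auto
  have ok: "okl F T P" and k0: "k0 < m" and a: "a \<in> carrier (F k0)" and lm: "l = m"
    using Cons(2,3) unfolding g okl_cons by auto
  have k0S: "k0 \<in> S" using Cons(5) g by auto
  have IH: "finsum (F m) (\<lambda>k. f k m (vl F f P k)) S = \<ominus>\<^bsub>F m\<^esub> vl F f P m"
    using Cons ok by auto
  have fa: "f k0 m a \<in> carrier (F m)" using f_closed[of k0 m a] k0 a by auto
  have trm: "f k m (vl F f (g # P) k) = (if k0 = k then f k0 m a else \<zero>\<^bsub>F m\<^esub>) \<oplus>\<^bsub>F m\<^esub> f k m (vl F f P k)"
    if "k \<in> S" for k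
  proof -
    interpret K: module R "F k" by (rule md)
    have km: "k < m" using that Cons(6) by auto
    have "f k m (vl F f (g # P) k) = f k m (gv F f g k) \<oplus>\<^bsub>F m\<^esub> f k m (vl F f P k)"
      using f_add[of k m "gv F f g k" "vl F f P k"] km gv_closed[of k0 l a k] k0 lm a vl_closed[OF ok]
      unfolding g by simp
    moreover have "f k m (gv F f g k) = (if k0 = k then f k0 m a else \<zero>\<^bsub>F m\<^esub>)"
      using km lm f_zero[of k m] unfolding g by auto
    ultimately show ?thesis by simp
  qed
  have "finsum (F m) (\<lambda>k. f k m (vl F f (g # P) k)) S
      = finsum (F m) (\<lambda>k. (if k0 = k then f k0 m a else \<zero>\<^bsub>F m\<^esub>) \<oplus>\<^bsub>F m\<^esub> f k m (vl F f P k)) S"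
  proof (intro M.finsum_cong')
    show "(\<lambda>k. (if k0 = k then f k0 m a else \<zero>\<^bsub>F m\<^esub>) \<oplus>\<^bsub>F m\<^esub> f k m (vl F f P k)) \<in> S \<rightarrow> carrier (F m)"
    proof
      fix k assume "k \<in> S"
      then have "k < m" using Cons(6) by auto
      then have "f k m (vl F f P k) \<in> carrier (F m)" using f_closed vl_closed[OF ok] by auto
      then show "(if k0 = k then f k0 m a else \<zero>\<^bsub>F m\<^esub>) \<oplus>\<^bsub>F m\<^esub> f k m (vl F f P k) \<in> carrier (F m)"
        using fa by auto
    qed
  qed (use trm in auto)
  also have "\<dots> = finsum (F m) (\<lambda>k. if k0 = k then f k0 m a else \<zero>\<^bsub>F m\<^esub>) S \<oplus>\<^bsub>F m\<^esub> finsum (F m) (\<lambda>k. f k m (vl F f P k)) S"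
    using fa by (intro M.finsum_addf) (auto simp: Pi_def intro!: f_closed vl_closed[OF ok] dest!: subsetD[OF Cons(6)])
  also have "finsum (F m) (\<lambda>k. if k0 = k then f k0 m a else \<zero>\<^bsub>F m\<^esub>) S = f k0 m a"
    using M.finsum_singleton[of k0 S "\<lambda>k. f k0 m a"] k0S Cons(4) fa by auto
  also have "f k0 m a \<oplus>\<^bsub>F m\<^esub> finsum (F m) (\<lambda>k. f k m (vl F f P k)) S = \<ominus>\<^bsub>F m\<^esub> vl F f (g # P) m"
    using IH fa vl_closed[OF ok, of m] k0 lm less_imp_neq[OF k0] unfolding g
    by (simp add: M.minus_add M.minus_minus)
  finally show ?case .
qed

lemma Im_F_zero: "\<zero>\<^bsub>F k\<^esub> \<in> Im_F F f k"
proof -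
  interpret K: module R "F k" by (rule md)
  show ?thesis
  unfolding Im_F_def by (rule CollectI, rule exI[of _ "{}"], rule exI[of _ "\<lambda>_. undefined"]) simp
qed

lemma Im_F_neg:
  assumes "finite L" "L \<subseteq> {l. l < k}" "\<forall>l\<in>L. y l \<in> carrier (F l)"
  shows "\<ominus>\<^bsub>F k\<^esub> finsum (F k) (\<lambda>l. f l k (y l)) L \<in> Im_F F f k"
proof -
  interpret K: module R "F k" by (rule md)
  have "finsum (F k) (\<lambda>l. f l k (\<ominus>\<^bsub>F l\<^esub> y l)) L = finsum (F k) (\<lambda>l. \<ominus>\<^bsub>F k\<^esub> f l k (y l)) L"
  proof (intro K.finsum_cong')
    fix l assume "l \<in> L"
    then show "f l k (\<ominus>\<^bsub>F l\<^esub> y l) = \<ominus>\<^bsub>F k\<^esub> f l k (y l)" using assms f_neg by auto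
  next
    show "(\<lambda>l. \<ominus>\<^bsub>F k\<^esub> f l k (y l)) \<in> L \<rightarrow> carrier (F k)" using assms f_closed by auto
  qed simp
  also have "\<dots> = \<ominus>\<^bsub>F k\<^esub> finsum (F k) (\<lambda>l. f l k (y l)) L"
    using assms f_closed by (intro finsum_neg) auto
  finally have e: "\<ominus>\<^bsub>F k\<^esub> finsum (F k) (\<lambda>l. f l k (y l)) L = finsum (F k) (\<lambda>l. f l k (\<ominus>\<^bsub>F l\<^esub> y l)) L" by simp
  have neg: "\<forall>l\<in>L. \<ominus>\<^bsub>F l\<^esub> y l \<in> carrier (F l)"
  proof
    fix l assume "l \<in> L"
    interpret Lm: module R "F l" by (rule md)
    show "\<ominus>\<^bsub>F l\<^esub> y l \<in> carrier (F l)" using assms \<open>l \<in> L\<close> by auto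
  qed
  show ?thesis unfolding e Im_F_def
    by (rule CollectI, rule exI[of _ L], rule exI[of _ "\<lambda>l. \<ominus>\<^bsub>F l\<^esub> y l"]) (use assms neg in auto)
qed

end

locale pf2 = pf R F f for R :: "('r, 'c) ring_scheme" and F :: "'p::order \<Rightarrow> ('r, 'b) module" and f +
  fixes i :: 'p
  assumes inj: "\<forall>j. j \<le> i \<longrightarrow> colim_map_inj R F f j"
    and wfr: "wf {(a, b). (a::'p) < b}"
begin

lemma G:
  "okl F (\<lambda>l. l \<le> i) gs \<Longrightarrow> (\<forall>l. k < l \<longrightarrow> vl F f gs l = \<zero>\<^bsub>F l\<^esub>) \<Longrightarrow> vl F f gs k \<in> Im_F F f k"
proof (induction gs rule: wf_induct[OF wf_inv_image[OF wf_mult[OF wfr], of "\<lambda>gs. mset (map (\<lambda>g. fst (snd g)) gs)"]])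
  case (1 gs)
  note IH = 1(1) and okgs = 1(2) and hyp = 1(3)
  let ?tg = "\<lambda>g::'p \<times> 'p \<times> 'b. fst (snd g)"
  show ?case
  proof (cases "gs = []")
    case True
    then show ?thesis using Im_F_zero by simp
  next
    case False
    have "finite (?tg ` set gs)" "?tg ` set gs \<noteq> {}" using False by auto
    then obtain m where mT: "m \<in> ?tg ` set gs" and maxm: "\<And>b. b \<in> ?tg ` set gs \<Longrightarrow> m \<le> b \<Longrightarrow> m = b"
      using finite_has_maximal by metis
    define P where "P = filter (\<lambda>g. ?tg g = m) gs"
    define Q where "Q = filter (\<lambda>g. \<not> ?tg g = m) gs"
    have okP: "okl F (\<lambda>l. l \<le> i) P" and okQ: "okl F (\<lambda>l. l \<le> i) Q"
      unfolding P_def Q_def by (rule okl_filter[OF okgs])+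
    have Pne: "P \<noteq> []" using mT unfolding P_def by (auto simp: filter_empty_conv)
    have split: "vl F f gs n = vl F f P n \<oplus>\<^bsub>F n\<^esub> vl F f Q n" for n
      unfolding P_def Q_def by (rule vl_filter[OF okgs])
    have setP: "\<And>g. g \<in> set P \<Longrightarrow> ?tg g = m \<and> fst g < m" using okgs unfolding P_def okl_def by auto
    have Qm: "vl F f Q m = \<zero>\<^bsub>F m\<^esub>"
    proof (rule vl_zero[OF _ okQ], intro ballI conjI)
      fix g assume gQ: "g \<in> set Q"
      then have gs: "g \<in> set gs" and tm: "?tg g \<noteq> m" unfolding Q_def by auto
      show "?tg g \<noteq> m" by (rule tm)
      show "fst g \<noteq> m"
      proof
        assume "fst g = m"
        moreover have "fst g < ?tg g" using okgs gs unfolding okl_def by auto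
        ultimately show False using maxm[of "?tg g"] gs by force
      qed
    qed
    interpret M: module R "F m" by (rule md)
    have vgm: "vl F f gs m = vl F f P m" using split[of m] Qm vl_closed[OF okP, of m] by simp
    have mi: "m \<le> i" using mT okgs unfolding okl_def by auto
    define S where "S = fst ` set P"
    have finS: "finite S" unfolding S_def by auto
    have Sm: "S \<subseteq> {k. k < m}" using setP unfolding S_def by auto
    have sumP: "finsum (F m) (\<lambda>k. f k m (vl F f P k)) S = \<ominus>\<^bsub>F m\<^esub> vl F f P m"
      by (rule sum_lemma[OF okP]) (use setP finS Sm in \<open>auto simp: S_def\<close>)
    have Pzero: "vl F f P n = \<zero>\<^bsub>F n\<^esub>" if "n \<notin> S" "n \<noteq> m" for n
      by (rule vl_zero[OF _ okP]) (use that setP in \<open>auto simp: S_def\<close>)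
    have multP: "(mset (map ?tg (Q @ hs)), mset (map ?tg gs)) \<in> mult {(a, b). a < b}"
      if "\<forall>g\<in>set hs. ?tg g < m" for hs
    proof -
      have e1: "mset (map ?tg (Q @ hs)) = mset (map ?tg Q) + mset (map ?tg hs)" by simp
      have "mset gs = mset P + mset Q" unfolding P_def Q_def by (simp add: multiset_partition[symmetric])
      then have e2: "mset (map ?tg gs) = mset (map ?tg Q) + mset (map ?tg P)" by simp
      show ?thesis unfolding e1 e2
      proof (rule one_step_implies_mult)
        show "mset (map ?tg P) \<noteq> {#}" using Pne by simp
        show "\<forall>k\<in>#mset (map ?tg hs). \<exists>j\<in>#mset (map ?tg P). (k, j) \<in> {(a, b). a < b}"
        proof
          fix k assume "k \<in># mset (map ?tg hs)"
          then have "k < m" using that by auto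
          moreover obtain g where "g \<in> set P" using Pne by (cases P) auto
          ultimately show "\<exists>j\<in>#mset (map ?tg P). (k, j) \<in> {(a, b). a < b}"
            using setP[of g] by (intro bexI[of _ m]) force+
        qed
      qed
    qed
    show ?thesis
    proof (cases "vl F f P m = \<zero>\<^bsub>F m\<^esub>")
      case True
      define y where "y = vl F f P"
      have supp: "{n. y n \<noteq> \<zero>\<^bsub>F n\<^esub>} \<subseteq> S"
        using Pzero True unfolding y_def by blast
      have yd: "y \<in> dsum_below F m"
        unfolding dsum_below_def
      proof (intro CollectI conjI allI impI)
        fix n show "y n \<in> carrier (F n)" unfolding y_def by (rule vl_closed[OF okP])
      next
        fix n assume "\<not> n < m"
        then show "y n = \<zero>\<^bsub>F n\<^esub>" using Pzero[of n] True Sm unfolding y_def by (cases "n = m") auto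
      next
        show "finite {n. y n \<noteq> \<zero>\<^bsub>F n\<^esub>}" using supp finS finite_subset by blast
      qed
      have "finsum (F m) (\<lambda>k. f k m (y k)) {n. y n \<noteq> \<zero>\<^bsub>F n\<^esub>} = finsum (F m) (\<lambda>k. f k m (y k)) S"
      proof (rule M.add.finprod_mono_neutral_cong_left[OF finS supp])
        fix n assume "n \<in> S - {n. y n \<noteq> \<zero>\<^bsub>F n\<^esub>}"
        then show "f n m (y n) = \<zero>\<^bsub>F m\<^esub>" using f_zero[of n m] Sm by auto
      next
        show "(\<lambda>k. f k m (y k)) \<in> S \<rightarrow> carrier (F m)"
          using Sm f_closed vl_closed[OF okP] unfolding y_def by auto
      qed simp
      also have "\<dots> = \<zero>\<^bsub>F m\<^esub>" using sumP True neg_zero unfolding y_def by simp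
      finally have "y \<in> colim_rel R F f m" using inj mi yd unfolding colim_map_inj_def by blast
      then obtain hs where okhs: "okl F (\<lambda>l. l < m) hs" and yhs: "y = vl F f hs"
        using colim_rel_vl by blast
      define gs' where "gs' = Q @ hs"
      have okhs': "okl F (\<lambda>l. l \<le> i) hs" using okl_mono[OF okhs] mi by (meson order.strict_trans2 less_imp_le)
      have ok': "okl F (\<lambda>l. l \<le> i) gs'" unfolding gs'_def okl_append using okQ okhs' by simp
      have same: "vl F f gs' n = vl F f gs n" for n
      proof -
        interpret N: module R "F n" by (rule md)
        show ?thesis unfolding gs'_def
          using vl_append[OF okQ okhs, of n] split[of n] yhs y_def vl_closed[OF okP, of n] vl_closed[OF okQ, of n]
          by (simp add: N.a_comm)
      qed
      have "\<forall>g\<in>set hs. ?tg g < m" using okhs unfolding okl_def by auto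
      then have "(gs', gs) \<in> inv_image (mult {(a, b). a < b}) (\<lambda>gs. mset (map ?tg gs))"
        using multP unfolding gs'_def by simp
      from IH[rule_format, OF this ok'] hyp same show ?thesis by simp
    next
      case False
      show ?thesis
      proof (cases "m = k")
        case True
        have "vl F f gs m = \<ominus>\<^bsub>F m\<^esub> finsum (F m) (\<lambda>l. f l m (vl F f P l)) S"
          using vgm sumP vl_closed[OF okP, of m] by (simp add: M.minus_minus)
        then have "vl F f gs k = \<ominus>\<^bsub>F k\<^esub> finsum (F k) (\<lambda>l. f l k (vl F f P l)) S"
          using True by simp
        also have "\<dots> \<in> Im_F F f k"
          by (rule Im_F_neg) (use finS Sm True vl_closed[OF okP] in auto)
        finally show ?thesis .
      next
        case mk: False
        show ?thesis
        proof (cases "k < m")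
          case True
          then show ?thesis using hyp vgm False by simp
        next
          case km: False
          have nk: "\<not> k \<le> m" using km mk by (simp add: order.order_iff_strict)
          have Pz: "vl F f P l = \<zero>\<^bsub>F l\<^esub>" if "k \<le> l" for l
          proof (rule Pzero)
            show "l \<noteq> m" using that nk by auto
            show "l \<notin> S"
            proof
              assume "l \<in> S"
              then have "l < m" using Sm by auto
              then show False using that nk by simp
            qed
          qed
          have same: "vl F f Q l = vl F f gs l" if "k \<le> l" for l
          proof -
            interpret N: module R "F l" by (rule md)
            show ?thesis using split[of l] Pz[OF that] vl_closed[OF okQ, of l] by simp
          qed
          have "(Q, gs) \<in> inv_image (mult {(a, b). a < b}) (\<lambda>gs. mset (map ?tg gs))"
            using multP[of "[]"] by simp
          from IH[rule_format, OF this okQ] hyp same show ?thesis by auto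
        qed
      qed
    qed
  qed
qed

end


context pf2 begin

lemma pp: "j \<le> i \<Longrightarrow> pseudo_projective F f j"
  unfolding pseudo_projective_def
proof (intro allI impI ballI)
  fix J x k
  assume ji: "j \<le> i" and finJ: "finite J" and Jj: "J \<subseteq> {k. k \<le> j}"
    and xc: "\<forall>k\<in>J. x k \<in> carrier (F k)"
    and s0: "finsum (F j) (\<lambda>k. f k j (x k)) J = \<zero>\<^bsub>F j\<^esub>"
    and kJ: "k \<in> J" and kmax: "\<forall>l\<in>J. \<not> k < l"
  interpret Mj: module R "F j" by (rule md)
  show "x k \<in> Im_F F f k"
  proof (cases "j \<in> J")
    case True
    have kj: "k = j" using kmax True kJ Jj by (auto simp: order.order_iff_strict)
    define L where "L = J - {j}"
    have finL: "finite L" using finJ unfolding L_def by auto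
    have Lj: "L \<subseteq> {l. l < j}" using Jj unfolding L_def by (auto simp: order.order_iff_strict)
    have JL: "J = insert j L" using True unfolding L_def by auto
    have fc: "(\<lambda>k. f k j (x k)) \<in> L \<rightarrow> carrier (F j)" using Lj xc f_closed unfolding L_def by auto
    have xj: "x j \<in> carrier (F j)" using xc True by auto
    have "finsum (F j) (\<lambda>k. f k j (x k)) J = f j j (x j) \<oplus>\<^bsub>F j\<^esub> finsum (F j) (\<lambda>k. f k j (x k)) L"
      unfolding JL using finL fc f_closed[of j j "x j"] xj by (subst Mj.finsum_insert) (auto simp: L_def)
    then have "x j \<oplus>\<^bsub>F j\<^esub> finsum (F j) (\<lambda>k. f k j (x k)) L = \<zero>\<^bsub>F j\<^esub>"
      using s0 f_id[OF xj] by simp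
    then have "\<ominus>\<^bsub>F j\<^esub> finsum (F j) (\<lambda>k. f k j (x k)) L = x j"
      using fc finL xj by (intro Mj.minus_equality) auto
    moreover have "\<ominus>\<^bsub>F j\<^esub> finsum (F j) (\<lambda>k. f k j (x k)) L \<in> Im_F F f j"
      by (rule Im_F_neg[OF finL Lj]) (use xc in \<open>auto simp: L_def\<close>)
    ultimately show ?thesis using kj by simp
  next
    case False
    define x' where "x' = (\<lambda>n. if n \<in> J then x n else \<zero>\<^bsub>F n\<^esub>)"
    have supp: "{n. x' n \<noteq> \<zero>\<^bsub>F n\<^esub>} \<subseteq> J" unfolding x'_def by auto
    have Jlt: "J \<subseteq> {l. l < j}" using Jj False by (auto simp: order.order_iff_strict)
    have xd: "x' \<in> dsum_below F j"
      unfolding dsum_below_def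
    proof (intro CollectI conjI allI impI)
      fix n
      interpret N: module R "F n" by (rule md)
      show "x' n \<in> carrier (F n)" using xc unfolding x'_def by auto
    next
      fix n assume "\<not> n < j"
      then show "x' n = \<zero>\<^bsub>F n\<^esub>" using Jlt unfolding x'_def by auto
    next
      show "finite {n. x' n \<noteq> \<zero>\<^bsub>F n\<^esub>}" using supp finJ finite_subset by blast
    qed
    have "finsum (F j) (\<lambda>k. f k j (x' k)) {n. x' n \<noteq> \<zero>\<^bsub>F n\<^esub>} = finsum (F j) (\<lambda>k. f k j (x' k)) J"
    proof (rule Mj.add.finprod_mono_neutral_cong_left[OF finJ supp])
      fix n assume "n \<in> J - {n. x' n \<noteq> \<zero>\<^bsub>F n\<^esub>}"
      then show "f n j (x' n) = \<zero>\<^bsub>F j\<^esub>" using f_zero[of n j] Jlt by auto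
    next
      show "(\<lambda>k. f k j (x' k)) \<in> J \<rightarrow> carrier (F j)"
        using Jlt f_closed xc unfolding x'_def by auto
    qed simp
    also have "\<dots> = finsum (F j) (\<lambda>k. f k j (x k)) J"
      by (intro Mj.finsum_cong') (use Jlt f_closed xc in \<open>auto simp: x'_def\<close>)
    also have "\<dots> = \<zero>\<^bsub>F j\<^esub>" by (rule s0)
    finally have "x' \<in> colim_rel R F f j" using inj ji xd unfolding colim_map_inj_def by blast
    then obtain gs where okgs: "okl F (\<lambda>l. l < j) gs" and xgs: "x' = vl F f gs"
      using colim_rel_vl by blast
    have ok': "okl F (\<lambda>l. l \<le> i) gs" using okl_mono[OF okgs] ji by (meson order.strict_trans2 less_imp_le)
    have "vl F f gs k \<in> Im_F F f k"
    proof (rule G[OF ok'], intro allI impI)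
      fix l assume "k < l"
      then have "l \<notin> J" using kmax by auto
      then show "vl F f gs l = \<zero>\<^bsub>F l\<^esub>" using xgs unfolding x'_def by (metis (mono_tags))
    qed
    then show ?thesis using xgs kJ unfolding x'_def by (metis (mono_tags))
  qed
qed

end

theorem lemma6p3:
  fixes R :: "('r, 'c) ring_scheme"
    and F :: "'p::order \<Rightarrow> ('r, 'b) module"
    and f :: "'p \<Rightarrow> 'p \<Rightarrow> 'b \<Rightarrow> 'b"
    and i :: 'p
  assumes "cring R"
    and "dcc TYPE('p)"
    and "poset_functor R F f"
    and "\<forall>j. j \<le> i \<longrightarrow> colim_map_inj R F f j"
  shows "\<forall>j. j \<le> i \<longrightarrow> pseudo_projective F f j"
proof -
  have wfr: "wf {(a, b). (a::'p) < b}"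
    using assms(2) unfolding dcc_def wf_iff_no_infinite_down_chain by auto
  interpret pf2 R F f i
    by (intro pf2.intro pf.intro pf2_axioms.intro) (use assms wfr in auto)
  show ?thesis using pp by blast
qed

end
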